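(* Let $r\ge 3$ and let $\mathcal H=(V,E)$ be an $r$-uniform bi-hypergraph such that $d(v)\le \frac{(r-1)^{r-1}\mathrm{e}^{-1}-2}{r}$ for every $v\in V$, where $\mathrm{e}$ is the base of the natural logarithm. Then $\mathcal H$ is colorable.
   Context: A bi-hypergraph $\mathcal H=(V,E)$ consists of a finite vertex set $V$ and a set $E$ of subsets of $V$, called edges, with no edge contained in another. It is $r$-uniform if every edge has exactly $r$ elements. The degree $d(v)$ of a vertex $v$ is the number of edges containing $v$. A mapping $f:V\to\mathbb N$ is a proper coloring of $\mathcal H$ if $1<|f(e)|<|e|$ for every $e\in E$, where $f(e)=\{f(v):v\in e\}$. $\mathcal H$ is colorable if it has a proper coloring. *)

theory Defs
  imports Complex_Main
begin

definition bi_hypergraph :: "'a set \<Rightarrow> 'a set set \<Rightarrow> bool" where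
  "bi_hypergraph V E \<longleftrightarrow> finite V \<and> (\<forall>e\<in>E. e \<subseteq> V)
     \<and> (\<forall>e\<in>E. \<forall>e'\<in>E. e \<subseteq> e' \<longrightarrow> e = e')"

definition uniform :: "nat \<Rightarrow> 'a set set \<Rightarrow> bool" where
  "uniform r E \<longleftrightarrow> (\<forall>e\<in>E. card e = r)"

definition degree :: "'a set set \<Rightarrow> 'a \<Rightarrow> nat" where
  "degree E v = card {e\<in>E. v \<in> e}"

definition proper_coloring :: "'a set \<Rightarrow> 'a set set \<Rightarrow> ('a \<Rightarrow> nat) \<Rightarrow> bool" where
  "proper_coloring V E f \<longleftrightarrow> (\<forall>e\<in>E. 1 < card (f ` e) \<and> card (f ` e) < card e)"

definition colorable :: "'a set \<Rightarrow> 'a set set \<Rightarrow> bool" where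
  "colorable V E \<longleftrightarrow> (\<exists>f. proper_coloring V E f)"

end

theory Submission imports Defs "HOL-Library.FuncSet" begin

definition monoc :: "('a \<Rightarrow> nat) \<Rightarrow> 'a set \<Rightarrow> bool" where
  "monoc h e \<longleftrightarrow> (\<exists>c. \<forall>v\<in>e. h v = c)"

definition Good :: "'a set \<Rightarrow> nat \<Rightarrow> 'a set set \<Rightarrow> ('a \<Rightarrow> nat) set" where
  "Good V k S = {h \<in> PiE V (\<lambda>_. {0..<k}). \<forall>e\<in>S. \<not> monoc h e}"

lemma Good_fin: "finite V \<Longrightarrow> finite (Good V k S)"
  unfolding Good_def by (rule finite_subset[of _ "PiE V (\<lambda>_. {0..<k})"]) (auto intro: finite_PiE)

lemma Good_anti: "S \<subseteq> S' \<Longrightarrow> Good V k S' \<subseteq> Good V k S"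
  unfolding Good_def by auto

lemma Good_insert_card:
  assumes "finite V"
  shows "real (card (Good V k S)) = card (Good V k S \<inter> {h. monoc h e}) + card (Good V k (insert e S))"
proof -
  have "Good V k S = (Good V k S \<inter> {h. monoc h e}) \<union> Good V k (insert e S)"
    "(Good V k S \<inter> {h. monoc h e}) \<inter> Good V k (insert e S) = {}"
    unfolding Good_def by auto
  then have "card (Good V k S) = card (Good V k S \<inter> {h. monoc h e}) + card (Good V k (insert e S))"
    by (metis Good_fin assms card_Un_disjoint finite_Int)
  then show ?thesis by simp
qed

lemma indep:
  assumes finV: "finite V" and eV: "e \<subseteq> V" and v0: "v0 \<in> e"
    and disj: "\<forall>f\<in>T. f \<inter> e = {}"
  shows "card (Good V k T \<inter> {h. monoc h e}) * k ^ (card e - 1) \<le> card (Good V k T)"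
proof -
  let ?A = "Good V k T \<inter> {h. monoc h e}"
  let ?P = "PiE (e - {v0}) (\<lambda>_. {0..<k::nat})"
  define \<Psi> where "\<Psi> = (\<lambda>(f::'a\<Rightarrow>nat, g::'a\<Rightarrow>nat) v. if v \<in> e - {v0} then g v else f v)"
  have fine: "finite e" using finV eV finite_subset by blast
  have cP: "card ?P = k ^ (card e - 1)"
    using fine v0 by (simp add: card_PiE card_Diff_singleton)
  have cD: "card (?A \<times> ?P) = card ?A * k ^ (card e - 1)"
    by (simp add: card_cartesian_product cP)
  have maps: "\<Psi> ` (?A \<times> ?P) \<subseteq> Good V k T"
  proof
    fix y assume "y \<in> \<Psi> ` (?A \<times> ?P)"
    then obtain f g where fA: "f \<in> ?A" and gP: "g \<in> ?P" and y: "y = \<Psi> (f, g)" by auto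
    have fPi: "f \<in> PiE V (\<lambda>_. {0..<k})" and fT: "\<forall>e'\<in>T. \<not> monoc f e'"
      using fA unfolding Good_def by auto
    have "y \<in> PiE V (\<lambda>_. {0..<k})"
      using fPi gP eV unfolding y \<Psi>_def by (auto simp: PiE_def Pi_def extensional_def)
    moreover have "\<not> monoc y e'" if "e' \<in> T" for e'
    proof -
      have "\<forall>v\<in>e'. y v = f v" using disj that unfolding y \<Psi>_def by auto
      then show ?thesis using fT that unfolding monoc_def by metis
    qed
    ultimately show "y \<in> Good V k T" unfolding Good_def by auto
  qed
  have inj: "inj_on \<Psi> (?A \<times> ?P)"
  proof (rule inj_onI)
    fix a b assume a: "a \<in> ?A \<times> ?P" and b: "b \<in> ?A \<times> ?P" and eq: "\<Psi> a = \<Psi> b"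
    obtain f g where ab: "a = (f, g)" by (cases a)
    obtain f' g' where bb: "b = (f', g')" by (cases b)
    have fm: "monoc f e" "monoc f' e" using a b ab bb by auto
    have fe: "f \<in> extensional V" "f' \<in> extensional V"
      using a b ab bb unfolding Good_def by (auto simp: PiE_def)
    have ge: "g \<in> extensional (e - {v0})" "g' \<in> extensional (e - {v0})"
      using a b ab bb by (auto simp: PiE_def)
    have pt: "(if v \<in> e - {v0} then g v else f v) = (if v \<in> e - {v0} then g' v else f' v)" for v
      using fun_cong[OF eq, of v] ab bb unfolding \<Psi>_def by simp
    have f0: "f v0 = f' v0" using pt[of v0] by simp
    have "f v = f' v" for v
    proof (cases "v \<in> e")
      case True
      then show ?thesis using fm f0 v0 unfolding monoc_def by metis
    next
      case False
      then show ?thesis using pt[of v] by simp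
    qed
    then have "f = f'" by auto
    moreover have "g = g'"
    proof
      fix v show "g v = g' v"
        using pt[of v] ge by (cases "v \<in> e - {v0}") (auto simp: extensional_def)
    qed
    ultimately show "a = b" using ab bb by simp
  qed
  have "card (?A \<times> ?P) \<le> card (Good V k T)"
    using card_inj_on_le[OF inj maps] Good_fin[OF finV] by blast
  then show ?thesis using cD by simp
qed


lemma Good_E_ne:
  fixes V :: "'a set" and E :: "'a set set" and k d :: nat and p x :: real
  assumes finV: "finite V" and k: "k > 0" and EV: "\<forall>e\<in>E. e \<subseteq> V"
    and ind: "\<forall>e\<in>E. \<forall>T\<subseteq>E. (\<forall>f\<in>T. f \<inter> e = {}) \<longrightarrow>
               real (card (Good V k T \<inter> {h. monoc h e})) \<le> p * card (Good V k T)"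
    and nb: "\<forall>e\<in>E. card {f\<in>E. f \<noteq> e \<and> f \<inter> e \<noteq> {}} \<le> d"
    and x0: "0 \<le> x" and x1: "x < 1" and px: "p \<le> x * (1 - x) ^ d"
  shows "Good V k E \<noteq> {}"
proof -
  have finE: "finite E" using finV EV
    by (meson Pow_iff finite_Pow_iff finite_subset subsetI)
  have lll: "\<And>S e. S \<subseteq> E \<Longrightarrow> e \<in> E \<Longrightarrow> e \<notin> S \<Longrightarrow>
     real (card (Good V k S \<inter> {h. monoc h e})) \<le> x * card (Good V k S)"
  proof -
    fix S0 e0
    show "S0 \<subseteq> E \<Longrightarrow> e0 \<in> E \<Longrightarrow> e0 \<notin> S0 \<Longrightarrow>
     real (card (Good V k S0 \<inter> {h. monoc h e0})) \<le> x * card (Good V k S0)"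
    proof (induction "card S0" arbitrary: S0 e0 rule: less_induct)
      case (less S e)
      have finS: "finite S" using less.prems finE finite_subset by blast
      define S1 where "S1 = {f\<in>S. f \<inter> e \<noteq> {}}"
      define S2 where "S2 = S - S1"
      have finS1: "finite S1" using finS S1_def by auto
      have chain: "T \<subseteq> S1 \<Longrightarrow> (1 - x) ^ card T * card (Good V k S2) \<le> card (Good V k (S2 \<union> T))" for T
      proof (induction T rule: infinite_finite_induct)
        case (infinite T)
        then show ?case using finS1 finite_subset by blast
      next
        case empty
        then show ?case by simp
      next
        case (insert f T)
        let ?U = "S2 \<union> T"
        have fS1: "f \<in> S1" and TS1: "T \<subseteq> S1" using insert.prems by auto
        have US: "?U \<subseteq> S" and fU: "f \<notin> ?U" and fS: "f \<in> S"
          using fS1 TS1 insert.hyps(2) unfolding S2_def S1_def by auto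
        have "?U \<subset> S" using US fU fS by blast
        then have "card ?U < card S" using finS by (rule psubset_card_mono[rotated])
        moreover have "?U \<subseteq> E" "f \<in> E" using US fS less.prems by auto
        ultimately have b: "real (card (Good V k ?U \<inter> {h. monoc h f})) \<le> x * card (Good V k ?U)"
          using less.hyps fU by blast
        have c: "real (card (Good V k ?U)) = card (Good V k ?U \<inter> {h. monoc h f}) + card (Good V k (insert f ?U))"
          by (rule Good_insert_card[OF finV])
        have "(1 - x) ^ card (insert f T) * card (Good V k S2) = (1 - x) * ((1 - x) ^ card T * card (Good V k S2))"
          using insert.hyps by simp
        also have "\<dots> \<le> (1 - x) * card (Good V k ?U)"
          using insert.IH TS1 x1 by (intro mult_left_mono) auto
        also have "\<dots> \<le> card (Good V k (insert f ?U))" using b c by (simp add: algebra_simps)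
        finally show ?case by (simp add: insert_commute)
      qed
      have S12: "S2 \<union> S1 = S" unfolding S2_def S1_def by auto
      have S1nb: "S1 \<subseteq> {f\<in>E. f \<noteq> e \<and> f \<inter> e \<noteq> {}}" using less.prems unfolding S1_def by auto
      have "card S1 \<le> card {f\<in>E. f \<noteq> e \<and> f \<inter> e \<noteq> {}}"
        using finE S1nb by (intro card_mono) auto
      then have cS1: "card S1 \<le> d" using nb less.prems(2) by (meson le_trans)
      have S2E: "S2 \<subseteq> E" using less.prems(1) unfolding S2_def by auto
      have S2d: "\<forall>f\<in>S2. f \<inter> e = {}" unfolding S2_def S1_def by auto
      have sub: "Good V k S \<inter> {h. monoc h e} \<subseteq> Good V k S2 \<inter> {h. monoc h e}"
        using Good_anti[of S2 S] unfolding S2_def by auto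
      have "real (card (Good V k S \<inter> {h. monoc h e})) \<le> card (Good V k S2 \<inter> {h. monoc h e})"
        using card_mono[OF _ sub] Good_fin[OF finV] by auto
      also have "\<dots> \<le> p * card (Good V k S2)" using ind less.prems(2) S2E S2d by blast
      also have "\<dots> \<le> x * (1 - x) ^ d * card (Good V k S2)"
        using px by (intro mult_right_mono) auto
      also have "\<dots> \<le> x * (1 - x) ^ card S1 * card (Good V k S2)"
        using cS1 x0 x1 by (intro mult_right_mono mult_left_mono power_decreasing) auto
      also have "\<dots> \<le> x * card (Good V k S)"
        using chain[of S1] S12 x0 by (simp add: mult.assoc mult_left_mono)
      finally show ?case .
    qed
  qed
  have chain: "T \<subseteq> E \<Longrightarrow> (1 - x) ^ card T * card (Good V k {}) \<le> card (Good V k T)" for T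
  proof (induction T rule: infinite_finite_induct)
    case (infinite T)
    then show ?case using finE finite_subset by blast
  next
    case empty
    then show ?case by simp
  next
    case (insert f T)
    have b: "real (card (Good V k T \<inter> {h. monoc h f})) \<le> x * card (Good V k T)"
      using lll insert by auto
    have c: "real (card (Good V k T)) = card (Good V k T \<inter> {h. monoc h f}) + card (Good V k (insert f T))"
      by (rule Good_insert_card[OF finV])
    have "(1 - x) ^ card (insert f T) * card (Good V k {}) = (1 - x) * ((1 - x) ^ card T * card (Good V k {}))"
      using insert.hyps by simp
    also have "\<dots> \<le> (1 - x) * card (Good V k T)"
      using insert x1 by (intro mult_left_mono) auto
    also have "\<dots> \<le> card (Good V k (insert f T))" using b c by (simp add: algebra_simps)
    finally show ?case .
  qed
  have "Good V k {} = PiE V (\<lambda>_. {0..<k})" unfolding Good_def by auto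
  then have "card (Good V k {}) = k ^ card V" using finV by (simp add: card_PiE)
  then have "0 < (1 - x) ^ card E * card (Good V k {})" using k x1 by simp
  moreover have "(1 - x) ^ card E * card (Good V k {}) \<le> card (Good V k E)" using chain[of E] by simp
  ultimately have "0 < real (card (Good V k E))" by linarith
  then show ?thesis by auto
qed


lemma expbd: "exp (-1) \<le> (1 - 1/(real d+1))^d"
proof (cases "d = 0")
  case True then show ?thesis by simp
next
  case False
  have "(1 + 1/real d) ^ d \<le> exp (1/real d) ^ d"
    by (intro power_mono) (auto simp: add_pos_nonneg exp_ge_add_one_self)
  also have "\<dots> = exp 1" using False by (simp add: exp_of_nat_mult[symmetric])
  finally have h: "(1 + 1/real d) ^ d \<le> exp 1" .
  have eq: "1 - 1/(real d+1) = inverse (1 + 1/real d)" using False by (simp add: field_simps)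
  have "exp (-1::real) = inverse (exp 1)" by (rule exp_minus)
  also have "\<dots> \<le> inverse ((1 + 1/real d) ^ d)"
    using h by (intro le_imp_inverse_le) (auto simp: add_pos_nonneg)
  also have "\<dots> = (1 - 1/(real d+1))^d" by (simp add: eq power_inverse)
  finally show ?thesis .
qed

theorem mainTheorem5:
  fixes V :: "'a set" and E :: "'a set set" and r :: nat
  assumes "r \<ge> 3"
    and "bi_hypergraph V E"
    and "uniform r E"
    and "\<forall>v\<in>V. real (degree E v) \<le> ((real r - 1) ^ (r - 1) * exp (-1) - 2) / real r"
  shows "colorable V E"
proof (cases "E = {}")
  case True
  then show ?thesis unfolding colorable_def proper_coloring_def by auto
next
  case False
  define B where "B = ((real r - 1) ^ (r - 1) * exp (-1) - 2) / real r"
  define k where "k = r - 1"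
  define K where "K = real k ^ (r - 1)"
  have r3: "r \<ge> 3" by fact
  have finV: "finite V" and EV: "\<forall>e\<in>E. e \<subseteq> V" using assms(2) unfolding bi_hypergraph_def by auto
  have cE: "\<forall>e\<in>E. card e = r" using assms(3) unfolding uniform_def by auto
  have finE: "finite E" using finV EV
    by (meson Pow_iff finite_Pow_iff finite_subset subsetI)
  have degB: "\<forall>v\<in>V. real (degree E v) \<le> B" using assms(4) unfolding B_def by auto
  have KB: "K = (real r - 1) ^ (r - 1)" unfolding K_def k_def using r3 by (simp add: of_nat_diff)
  have k0: "k > 0" unfolding k_def using r3 by simp
  have Kpos: "K > 0" unfolding K_def using k0 by simp
  obtain e0 where e0: "e0 \<in> E" using False by auto
  have "e0 \<noteq> {}" using cE e0 r3 by fastforce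
  then obtain v0 where v0: "v0 \<in> e0" by auto
  have v0V: "v0 \<in> V" using EV e0 v0 by auto
  have "{e0} \<subseteq> {e\<in>E. v0 \<in> e}" using e0 v0 by auto
  then have "card {e0} \<le> card {e\<in>E. v0 \<in> e}" using finE by (intro card_mono) auto
  then have "1 \<le> degree E v0" unfolding degree_def by simp
  then have B1: "B \<ge> 1" using degB v0V by fastforce
  define d where "d = nat \<lfloor>real r * B\<rfloor>"
  define x :: real where "x = 1 / (real d + 1)"
  define p :: real where "p = 1 / K"
  have dle: "real d \<le> real r * B" unfolding d_def using B1 by simp
  have nb: "\<forall>e\<in>E. card {f\<in>E. f \<noteq> e \<and> f \<inter> e \<noteq> {}} \<le> d"
  proof
    fix e assume e: "e \<in> E"
    have fe: "finite e" using e EV finV finite_subset by blast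
    have sub: "{f\<in>E. f \<noteq> e \<and> f \<inter> e \<noteq> {}} \<subseteq> (\<Union>v\<in>e. {f\<in>E. v \<in> f})" by auto
    have "card {f\<in>E. f \<noteq> e \<and> f \<inter> e \<noteq> {}} \<le> card (\<Union>v\<in>e. {f\<in>E. v \<in> f})"
      using sub by (intro card_mono) (auto intro: finite_subset[OF _ finE])
    also have "\<dots> \<le> (\<Sum>v\<in>e. card {f\<in>E. v \<in> f})" using fe by (rule card_UN_le)
    finally have h: "card {f\<in>E. f \<noteq> e \<and> f \<inter> e \<noteq> {}} \<le> (\<Sum>v\<in>e. card {f\<in>E. v \<in> f})" .
    have "real (card {f\<in>E. f \<noteq> e \<and> f \<inter> e \<noteq> {}}) \<le> (\<Sum>v\<in>e. real (degree E v))"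
      unfolding degree_def of_nat_sum[symmetric] of_nat_le_iff by (rule h)
    also have "\<dots> \<le> (\<Sum>v\<in>e. B)" using degB EV e by (intro sum_mono) auto
    also have "\<dots> = real r * B" using cE e by simp
    finally have "real (card {f\<in>E. f \<noteq> e \<and> f \<inter> e \<noteq> {}}) \<le> real r * B" .
    then have "int (card {f\<in>E. f \<noteq> e \<and> f \<inter> e \<noteq> {}}) \<le> \<lfloor>real r * B\<rfloor>"
      by (simp add: le_floor_iff)
    then show "card {f\<in>E. f \<noteq> e \<and> f \<inter> e \<noteq> {}} \<le> d" unfolding d_def by linarith
  qed
  have ind: "\<forall>e\<in>E. \<forall>T\<subseteq>E. (\<forall>f\<in>T. f \<inter> e = {}) \<longrightarrow>
               real (card (Good V k T \<inter> {h. monoc h e})) \<le> p * card (Good V k T)"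
  proof (intro ballI allI impI)
    fix e T assume e: "e \<in> E" and "T \<subseteq> E" and disj: "\<forall>f\<in>T. f \<inter> e = {}"
    have "e \<noteq> {}" using cE e r3 by fastforce
    then obtain w where w: "w \<in> e" by auto
    have "card (Good V k T \<inter> {h. monoc h e}) * k ^ (card e - 1) \<le> card (Good V k T)"
      using indep[OF finV _ w disj] EV e by auto
    then have "real (card (Good V k T \<inter> {h. monoc h e})) * K \<le> card (Good V k T)"
      unfolding K_def using cE e by (metis of_nat_le_iff of_nat_mult of_nat_power)
    then show "real (card (Good V k T \<inter> {h. monoc h e})) \<le> p * card (Good V k T)"
      unfolding p_def using Kpos by (simp add: field_simps)
  qed
  have "1 * 1 \<le> real r * B" using r3 B1 by (intro mult_mono) auto
  then have "1 \<le> \<lfloor>real r * B\<rfloor>" by (simp add: le_floor_iff)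
  then have d1: "d \<ge> 1" unfolding d_def by linarith
  have x0: "0 \<le> x" and x1: "x < 1" unfolding x_def using d1 by auto
  have px: "p \<le> x * (1 - x) ^ d"
  proof -
    have rB: "real r * B = K * exp (-1) - 2" unfolding B_def KB using r3 by simp
    have dK: "real d + 1 \<le> K * exp (-1)" using dle rB by linarith
    have "p = exp (-1) / (K * exp (-1))" unfolding p_def by simp
    also have "\<dots> \<le> exp (-1) / (real d + 1)"
      using dK by (intro divide_left_mono) auto
    also have "\<dots> \<le> x * (1 - x) ^ d" unfolding x_def using expbd[of d]
      by (simp add: divide_right_mono)
    finally show ?thesis .
  qed
  have "Good V k E \<noteq> {}" using Good_E_ne[OF finV k0 EV ind nb x0 x1 px] .
  then obtain f where f: "f \<in> Good V k E" by auto
  have fPi: "f \<in> PiE V (\<lambda>_. {0..<k})" and fnm: "\<forall>e\<in>E. \<not> monoc f e"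
    using f unfolding Good_def by auto
  have "proper_coloring V E f" unfolding proper_coloring_def
  proof
    fix e assume e: "e \<in> E"
    have fe: "finite e" using e EV finV finite_subset by blast
    have ne: "e \<noteq> {}" using cE e r3 by fastforce
    have eV: "e \<subseteq> V" using EV e by auto
    have img: "f ` e \<subseteq> {0..<k}" using fPi eV by (auto simp: PiE_def Pi_def)
    have "card (f ` e) \<le> k" using card_mono[OF _ img] by simp
    then have lt: "card (f ` e) < card e" using cE e r3 unfolding k_def by simp
    have "card (f ` e) \<noteq> 0" using fe ne by simp
    moreover have "card (f ` e) \<noteq> 1"
    proof
      assume "card (f ` e) = 1"
      then obtain c where "f ` e = {c}" by (meson card_1_singletonE)
      then have "monoc f e" unfolding monoc_def by auto
      then show False using fnm e by auto
    qed
    ultimately show "1 < card (f ` e) \<and> card (f ` e) < card e" using lt by linarith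
  qed
  then show ?thesis unfolding colorable_def by auto
qed

end
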